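(* Let $\boldsymbol{m}\in\mathbb{N}^2$. For every subset $\Omega\subseteq\Gamma_\square$, the set $\Gamma_\Omega=(\Gamma_\square\setminus\Omega)\cup\{\boldsymbol{\gamma}\in\mathrm{K}:\boldsymbol{\gamma}^*\in\Omega\}$ is a spectral index set for $\mathrm{I}^{(\boldsymbol{m})}$; conversely, every spectral index set $\Gamma$ for $\mathrm{I}^{(\boldsymbol{m})}$ is of the form $\Gamma=\Gamma_\Omega$ for some $\Omega\subseteq\Gamma_\square$. In particular every spectral index set has $(2m_1+1)m_2$ elements, and for every spectral index set $\Gamma$ and $\boldsymbol{\gamma}\in\Gamma$ one has $\|\chi_{\boldsymbol{\gamma}}\|_w^2=1$ if $\gamma_1\in\{0,2m_1\}$ and $\|\chi_{\boldsymbol{\gamma}}\|_w^2=\frac12$ otherwise.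
   Context: $\mathrm{I}^{(\boldsymbol{m})}=\{(i_1,i_2)\in\mathbb{Z}^2:\ 0\le i_1\le m_1,\ -2m_2<i_2\le 2m_2,\ i_2\le0\text{ if }i_1=m_1,\ i_1+i_2\text{ even}\}$; $\mathcal{L}(\mathrm{I}^{(\boldsymbol{m})})$ is the space of all functions $\mathrm{I}^{(\boldsymbol{m})}\to\mathbb{C}$. Weights $w_{\boldsymbol{i}}=\frac{1}{4m_1m_2}$ if $i_1=0$, $w_{\boldsymbol{i}}=\frac{2}{4m_1m_2}$ if $0<i_1\le m_1$; $\langle f,h\rangle_w=\sum_{\boldsymbol{i}}w_{\boldsymbol{i}}f(\boldsymbol{i})\overline{h(\boldsymbol{i})}$. $\chi_{\boldsymbol{\gamma}}(\boldsymbol{i})=\cos\!\big(\frac{\gamma_1i_1\pi}{2m_1}\big)e^{\mathrm{i}\gamma_2i_2\pi/(2m_2)}$. $\mathrm{K}=\{\boldsymbol{\gamma}\in\mathbb{Z}^2: 0\le\gamma_1\le2m_1,\ -2m_2<\gamma_2\le2m_2\}$. A spectral index set for $\mathrm{I}^{(\boldsymbol{m})}$ is a set $\Gamma\subseteq\mathrm{K}$ such that $\gamma_1+\gamma_2$ is even for all $\boldsymbol{\gamma}\in\Gamma$ and $\{\chi_{\boldsymbol{\gamma}}:\boldsymbol{\gamma}\in\Gamma\}$ is an orthogonal basis of $(\mathcal{L}(\mathrm{I}^{(\boldsymbol{m})}),\langle\cdot,\cdot\rangle_w)$. $\Gamma_\square=\{\boldsymbol{\gamma}\in\mathrm{K}: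 -m_2<\gamma_2\le m_2,\ \gamma_1+\gamma_2\text{ even}\}$. The flip operator $^*:\mathrm{K}\to\mathrm{K}$ is $\boldsymbol{\gamma}^*=(2m_1-\gamma_1,\ \gamma_2')$ where $\gamma_2'$ is the unique element of $(-2m_2,2m_2]$ congruent to $\gamma_2+2m_2$ modulo $4m_2$. *)

theory Defs
  imports "HOL-Analysis.Analysis"
begin

definition Ipts :: "nat \<Rightarrow> nat \<Rightarrow> (int \<times> int) set" where
  "Ipts m1 m2 = {(i1, i2). 0 \<le> i1 \<and> i1 \<le> int m1 \<and> - 2 * int m2 < i2 \<and> i2 \<le> 2 * int m2
      \<and> (i1 = int m1 \<longrightarrow> i2 \<le> 0) \<and> even (i1 + i2)}"

definition wt :: "nat \<Rightarrow> nat \<Rightarrow> int \<times> int \<Rightarrow> real" where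
  "wt m1 m2 i = (if fst i = 0 then 1 / (4 * real m1 * real m2) else 2 / (4 * real m1 * real m2))"

text \<open>Weighted inner product on functions I^(m) -> C (functions are represented
  by total functions, only their values on I^(m) matter).\<close>
definition winner :: "nat \<Rightarrow> nat \<Rightarrow> (int \<times> int \<Rightarrow> complex) \<Rightarrow> (int \<times> int \<Rightarrow> complex) \<Rightarrow> complex" where
  "winner m1 m2 f h = (\<Sum>i\<in>Ipts m1 m2. complex_of_real (wt m1 m2 i) * f i * cnj (h i))"

definition chi :: "nat \<Rightarrow> nat \<Rightarrow> int \<times> int \<Rightarrow> int \<times> int \<Rightarrow> complex" where
  "chi m1 m2 \<gamma> i = complex_of_real (cos (real_of_int (fst \<gamma>) * real_of_int (fst i) * pi / (2 * real m1)))
      * exp (\<i> * complex_of_real (real_of_int (snd \<gamma>) * real_of_int (snd i) * pi / (2 * real m2)))"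

definition Kset :: "nat \<Rightarrow> nat \<Rightarrow> (int \<times> int) set" where
  "Kset m1 m2 = {(g1, g2). 0 \<le> g1 \<and> g1 \<le> 2 * int m1 \<and> - 2 * int m2 < g2 \<and> g2 \<le> 2 * int m2}"

definition spectral_index_set :: "nat \<Rightarrow> nat \<Rightarrow> (int \<times> int) set \<Rightarrow> bool" where
  "spectral_index_set m1 m2 \<Gamma> \<longleftrightarrow>
     \<Gamma> \<subseteq> Kset m1 m2 \<and>
     (\<forall>\<gamma>\<in>\<Gamma>. even (fst \<gamma> + snd \<gamma>)) \<and>
     (\<forall>\<gamma>\<in>\<Gamma>. winner m1 m2 (chi m1 m2 \<gamma>) (chi m1 m2 \<gamma>) \<noteq> 0) \<and>
     (\<forall>\<gamma>\<in>\<Gamma>. \<forall>\<gamma>'\<in>\<Gamma>. \<gamma> \<noteq> \<gamma>' \<longrightarrow> winner m1 m2 (chi m1 m2 \<gamma>) (chi m1 m2 \<gamma>') = 0) \<and>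
     (\<forall>f :: int \<times> int \<Rightarrow> complex. \<exists>c :: int \<times> int \<Rightarrow> complex.
        \<forall>i\<in>Ipts m1 m2. f i = (\<Sum>\<gamma>\<in>\<Gamma>. c \<gamma> * chi m1 m2 \<gamma> i))"

definition Gamma_sq :: "nat \<Rightarrow> nat \<Rightarrow> (int \<times> int) set" where
  "Gamma_sq m1 m2 = {\<gamma> \<in> Kset m1 m2. - int m2 < snd \<gamma> \<and> snd \<gamma> \<le> int m2 \<and> even (fst \<gamma> + snd \<gamma>)}"

definition flip :: "nat \<Rightarrow> nat \<Rightarrow> int \<times> int \<Rightarrow> int \<times> int" where
  "flip m1 m2 \<gamma> = (2 * int m1 - fst \<gamma>,
      THE g. - 2 * int m2 < g \<and> g \<le> 2 * int m2 \<and> g mod (4 * int m2) = (snd \<gamma> + 2 * int m2) mod (4 * int m2))"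

definition Gamma_Omega :: "nat \<Rightarrow> nat \<Rightarrow> (int \<times> int) set \<Rightarrow> (int \<times> int) set" where
  "Gamma_Omega m1 m2 \<Omega> = (Gamma_sq m1 m2 - \<Omega>) \<union> {\<gamma> \<in> Kset m1 m2. flip m1 m2 \<gamma> \<in> \<Omega>}"

end

theory Submission
  imports Defs "Jordan_Normal_Form.Determinant"
begin


lemma span_from_orth:
  fixes I :: "'a set" and G :: "'b set" and phi :: "'b \<Rightarrow> 'a \<Rightarrow> complex" and w :: "'a \<Rightarrow> complex"
  assumes fI: "finite I" and fG: "finite G" and cardeq: "card G = card I"
    and nz: "\<And>g. g \<in> G \<Longrightarrow> (\<Sum>i\<in>I. w i * phi g i * cnj (phi g i)) \<noteq> 0"
    and orth: "\<And>g g'. g \<in> G \<Longrightarrow> g' \<in> G \<Longrightarrow> g \<noteq> g' \<Longrightarrow> (\<Sum>i\<in>I. w i * phi g i * cnj (phi g' i)) = 0"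
  shows "\<exists>c. \<forall>i\<in>I. f i = (\<Sum>g\<in>G. c g * phi g i)"
proof -
  define n where "n = card I"
  obtain e where e: "bij_betw e {0..<n} I" using ex_bij_betw_nat_finite[OF fI] n_def by blast
  obtain b where b: "bij_betw b {0..<n} G" using ex_bij_betw_nat_finite[OF fG] cardeq n_def by auto
  define nr where "nr g = (\<Sum>i\<in>I. w i * phi g i * cnj (phi g i))" for g
  define M where "M = mat n n (\<lambda>(s,r). phi (b r) (e s))"
  define L where "L = mat n n (\<lambda>(r,s). w (e s) * cnj (phi (b r) (e s)) / nr (b r))"
  have LM: "L * M = 1\<^sub>m n"
  proof (rule eq_matI)
    fix r r' assume "r < dim_row (1\<^sub>m n)" "r' < dim_col (1\<^sub>m n)"
    then have r: "r < n" "r' < n" by auto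
    have "(L * M) $$ (r,r') = (\<Sum>s\<in>{0..<n}. w (e s) * cnj (phi (b r) (e s)) / nr (b r) * phi (b r') (e s))"
      using r by (simp add: L_def M_def scalar_prod_def)
    also have "\<dots> = (\<Sum>s\<in>{0..<n}. w (e s) * phi (b r') (e s) * cnj (phi (b r) (e s))) / nr (b r)"
      by (simp add: sum_divide_distrib algebra_simps)
    also have "\<dots> = (\<Sum>i\<in>I. w i * phi (b r') i * cnj (phi (b r) i)) / nr (b r)"
      by (subst sum.reindex_bij_betw[OF e, symmetric]) simp
    also have "\<dots> = (if r = r' then 1 else 0)"
    proof (cases "r = r'")
      case True
      have "b r \<in> G" using b r by (auto simp: bij_betw_def)
      then show ?thesis using True nz[of "b r"] by (simp add: nr_def)
    next
      case False
      have "b r \<noteq> b r'" using b r False by (auto simp: bij_betw_def inj_on_def)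
      moreover have "b r \<in> G" "b r' \<in> G" using b r by (auto simp: bij_betw_def)
      ultimately show ?thesis using False orth[of "b r'" "b r"] by simp
    qed
    finally show "(L * M) $$ (r,r') = 1\<^sub>m n $$ (r,r')" using r by simp
  qed (auto simp: L_def M_def)
  have MLi: "M * L = 1\<^sub>m n"
    by (rule mat_mult_left_right_inverse[OF _ _ LM]) (auto simp: M_def L_def)
  define v where "v = vec n (\<lambda>s. f (e s))"
  define u where "u = L *\<^sub>v v"
  have "M *\<^sub>v (L *\<^sub>v v) = (M * L) *\<^sub>v v"
    by (rule assoc_mult_mat_vec[symmetric]) (auto simp: M_def L_def v_def)
  then have Mu: "M *\<^sub>v u = v" unfolding u_def MLi by (simp add: v_def)
  define c where "c g = u $ (the_inv_into {0..<n} b g)" for g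
  show ?thesis
  proof (intro exI ballI)
    fix i assume "i \<in> I"
    then obtain s where s: "s < n" "e s = i" using e by (auto simp: bij_betw_def)
    have "f i = v $ s" using s by (simp add: v_def)
    also have "\<dots> = (M *\<^sub>v u) $ s" using Mu by simp
    also have "\<dots> = (\<Sum>r\<in>{0..<n}. phi (b r) i * u $ r)"
      using s by (simp add: M_def scalar_prod_def u_def L_def)
    also have "\<dots> = (\<Sum>r\<in>{0..<n}. c (b r) * phi (b r) i)"
      by (rule sum.cong) (auto simp: c_def the_inv_into_f_f[OF bij_betw_imp_inj_on[OF b]])
    also have "\<dots> = (\<Sum>g\<in>G. c g * phi g i)"
      by (rule sum.reindex_bij_betw[OF b])
    finally show "f i = (\<Sum>g\<in>G. c g * phi g i)" .
  qed
qed




lemma slice_param: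
  fixes a c :: int and n :: nat
  shows "{x::int. a < x \<and> x \<le> a + 2 * int n \<and> even (c + x)}
       = (\<lambda>k. a + 1 + (a + 1 + c) mod 2 + 2 * int k) ` {..<n}"
proof (rule Set.set_eqI, rule iffI)
  fix x assume x: "x \<in> {x::int. a < x \<and> x \<le> a + 2 * int n \<and> even (c + x)}"
  define r where "r = (a + 1 + c) mod 2"
  define k where "k = (x - a - 1 - r) div 2"
  have r: "r = 0 \<or> r = 1" unfolding r_def by presburger
  have e: "x = a + 1 + r + 2 * k" using x r unfolding k_def r_def by auto presburger+
  have "k \<ge> 0" "k < int n" using e x r by auto
  then show "x \<in> (\<lambda>k. a + 1 + (a + 1 + c) mod 2 + 2 * int k) ` {..<n}"
    using e unfolding r_def by (auto intro!: image_eqI[of _ _ "nat k"])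
next
  fix x assume "x \<in> (\<lambda>k. a + 1 + (a + 1 + c) mod 2 + 2 * int k) ` {..<n}"
  then obtain k where k: "k < n" "x = a + 1 + (a + 1 + c) mod 2 + 2 * int k" by auto
  have r: "(a + 1 + c) mod 2 = 0 \<or> (a + 1 + c) mod 2 = 1" by presburger
  show "x \<in> {x::int. a < x \<and> x \<le> a + 2 * int n \<and> even (c + x)}"
    using k r by auto
qed

lemma inj_slice: "inj_on (\<lambda>k::nat. (b::int) + 2 * int k) A"
  by (auto simp: inj_on_def)

lemma card_slice:
  fixes a c :: int and n :: nat
  shows "card {x::int. a < x \<and> x \<le> a + 2 * int n \<and> even (c + x)} = n"
  unfolding slice_param by (subst card_image) (auto simp: inj_on_def)

lemma flip_eq:
  assumes "m2 \<ge> 1" "- 2 * int m2 < g2" "g2 \<le> 2 * int m2"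
  shows "flip m1 m2 (g1, g2) = (2 * int m1 - g1, if g2 \<le> 0 then g2 + 2 * int m2 else g2 - 2 * int m2)"
proof -
  let ?c = "if g2 \<le> 0 then g2 + 2 * int m2 else g2 - 2 * int m2"
  let ?P = "\<lambda>g. - 2 * int m2 < g \<and> g \<le> 2 * int m2 \<and> g mod (4 * int m2) = (g2 + 2 * int m2) mod (4 * int m2)"
  have P: "?P ?c"
  proof (cases "g2 \<le> 0")
    case True then show ?thesis using assms by auto
  next
    case False
    have "(g2 - 2 * int m2) mod (4 * int m2) = (g2 - 2 * int m2 + 4 * int m2) mod (4 * int m2)"
      by (metis mod_add_self2)
    then show ?thesis using assms False by (auto simp: algebra_simps)
  qed
  have U: "g = ?c" if "?P g" for g
  proof -
    have "g mod (4 * int m2) = ?c mod (4 * int m2)" using that P by simp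
    then have "(4 * int m2) dvd (g - ?c)" by (simp add: mod_eq_dvd_iff)
    then obtain q where q: "g - ?c = 4 * int m2 * q" by (auto elim: dvdE)
    have "- 4 * int m2 < g - ?c" "g - ?c < 4 * int m2" using that P by linarith+
    then have "q = 0" using q assms(1)
      by (smt (verit) mult_le_cancel_left1 mult_minus_right mult_less_cancel_left2)
    then show ?thesis using q by simp
  qed
  have "(THE g. ?P g) = ?c" using P U by (intro the_equality) blast+
  then show ?thesis unfolding flip_def by simp
qed




lemma geo_exp:
  fixes t :: int and N :: nat
  assumes N: "N > 0"
  shows "(\<Sum>k<N. exp (\<i> * complex_of_real (2 * pi * real_of_int t * real k / real N)))
        = (if int N dvd t then of_nat N else 0)"
proof -
  define q where "q = exp (\<i> * complex_of_real (2 * pi * real_of_int t / real N))"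
  have qk: "exp (\<i> * complex_of_real (2 * pi * real_of_int t * real k / real N)) = q ^ k" for k
  proof -
    have "\<i> * complex_of_real (2 * pi * real_of_int t * real k / real N)
          = of_nat k * (\<i> * complex_of_real (2 * pi * real_of_int t / real N))"
      by (simp add: field_simps)
    then show ?thesis unfolding q_def by (metis exp_of_nat_mult)
  qed
  have qN: "q ^ N = 1"
  proof -
    have "q ^ N = exp (of_nat N * (\<i> * complex_of_real (2 * pi * real_of_int t / real N)))"
      unfolding q_def by (simp only: exp_of_nat_mult)
    also have "of_nat N * (\<i> * complex_of_real (2 * pi * real_of_int t / real N))
        = \<i> * (complex_of_int t * (complex_of_real pi * 2))"
      using N by (simp add: field_simps)
    finally show ?thesis by (simp add: exp_2pi_1_int)
  qed
  have q1: "q = 1 \<longleftrightarrow> int N dvd t"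
  proof
    assume "q = 1"
    then obtain n :: int where n: "2 * pi * real_of_int t / real N = real_of_int (2 * n) * pi"
      unfolding q_def exp_eq_1 by auto
    then have "real_of_int t = real_of_int n * real N" using N by (simp add: field_simps)
    then have "t = n * int N" by (metis of_int_eq_iff of_int_mult of_int_of_nat_eq)
    then show "int N dvd t" by simp
  next
    assume "int N dvd t"
    then obtain n where n: "t = int N * n" by (auto elim: dvdE)
    have "\<i> * complex_of_real (2 * pi * real_of_int t / real N) = \<i> * (complex_of_int n * (complex_of_real pi * 2))"
      using N by (simp add: n field_simps)
    then show "q = 1" unfolding q_def by (simp add: exp_2pi_1_int)
  qed
  show ?thesis
  proof (cases "int N dvd t")
    case True
    then have "q = 1" using q1 by simp
    then show ?thesis using True by (simp only: qk) simp
  next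
    case False
    then have "q \<noteq> 1" using q1 by simp
    then show ?thesis using False by (simp only: qk) (simp add: geometric_sum qN)
  qed
qed

lemma geo_cos:
  fixes t :: int and N :: nat
  assumes N: "N > 0"
  shows "(\<Sum>k<N. cos (2 * pi * real_of_int t * real k / real N)) = (if int N dvd t then real N else 0)"
proof -
  have "(\<Sum>k<N. cos (2 * pi * real_of_int t * real k / real N))
     = Re (\<Sum>k<N. exp (\<i> * complex_of_real (2 * pi * real_of_int t * real k / real N)))"
    by (simp add: Re_exp)
  also have "\<dots> = (if int N dvd t then real N else 0)" using geo_exp[OF N, of t] by simp
  finally show ?thesis .
qed




lemma cos_refl_2m:
  fixes t j :: int and m :: nat
  assumes "m \<ge> 1"
  shows "cos (pi * real_of_int t * real_of_int (2 * int m - j) / real m) = cos (pi * real_of_int t * real_of_int j / real m)"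
proof -
  have "pi * real_of_int t * real_of_int (2 * int m - j) / real m = (2 * pi) * of_int t - pi * real_of_int t * real_of_int j / real m"
    using assms by (simp add: field_simps)
  then show ?thesis by (simp add: cos_diff)
qed

lemma cos_half:
  fixes t :: int and m :: nat
  assumes m: "m \<ge> 1"
  shows "(\<Sum>j\<in>{0..int m}. (if j = 0 \<or> j = int m then 1 else 2) * cos (pi * real_of_int t * real_of_int j / real m))
       = (if int (2 * m) dvd t then 2 * real m else 0)"
proof -
  define f where "f j = cos (pi * real_of_int t * real_of_int j / real m)" for j :: int
  have full: "(\<Sum>j\<in>{0..<2 * int m}. f j) = (if int (2 * m) dvd t then 2 * real m else 0)"
  proof -
    have "(\<Sum>j\<in>{0..<2 * int m}. f j) = (\<Sum>k<2 * m. f (int k))"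
    proof -
      have "{0..<2 * int m} = int ` {..<2 * m}" by (simp add: image_int_atLeastLessThan atLeast0LessThan[symmetric])
      then show ?thesis by (simp add: sum.reindex)
    qed
    also have "\<dots> = (\<Sum>k<2 * m. cos (2 * pi * real_of_int t * real k / real (2 * m)))"
      unfolding f_def by (rule sum.cong) (auto simp: field_simps)
    also have "\<dots> = (if int (2 * m) dvd t then 2 * real m else 0)"
      using geo_cos[of "2 * m" t] m by simp
    finally show ?thesis .
  qed
  have split: "{0..<2 * int m} = {0..int m} \<union> {int m + 1..<2 * int m}" using m by auto
  have refl: "(\<Sum>j\<in>{int m + 1..<2 * int m}. f j) = (\<Sum>j\<in>{1..<int m}. f j)"
  proof (rule sum.reindex_bij_witness[of _ "\<lambda>j. 2 * int m - j" "\<lambda>j. 2 * int m - j"])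
    fix j assume "j \<in> {int m + 1..<2 * int m}"
    then show "f (2 * int m - j) = f j" unfolding f_def using cos_refl_2m[OF m, of t j] by simp
  qed auto
  have "(\<Sum>j\<in>{0..int m}. (if j = 0 \<or> j = int m then 1 else 2) * f j)
      = (\<Sum>j\<in>{0..int m}. f j + (if j \<in> {1..<int m} then f j else 0))"
    by (rule sum.cong) auto
  also have "\<dots> = (\<Sum>j\<in>{0..int m}. f j) + (\<Sum>j\<in>{1..<int m}. f j)"
  proof -
    have "{0..int m} \<inter> {j. 1 \<le> j \<and> j < int m} = {1..<int m}" by auto
    then show ?thesis by (simp add: sum.distrib sum.If_cases)
  qed
  also have "\<dots> = (\<Sum>j\<in>{0..<2 * int m}. f j)"
    unfolding split by (subst sum.union_disjoint) (auto simp: refl)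
  finally show ?thesis using full unfolding f_def by simp
qed




definition Sl :: "nat \<Rightarrow> nat \<Rightarrow> int \<Rightarrow> int set" where
  "Sl m1 m2 i1 = {x::int. - 2 * int m2 < x \<and> x \<le> - 2 * int m2 + 2 * int (if i1 = int m1 then m2 else 2 * m2) \<and> even (i1 + x)}"

lemma Ipts_Sigma: "Ipts m1 m2 = Sigma {0..int m1} (Sl m1 m2)"
  unfolding Ipts_def Sl_def by (auto split: if_splits)

lemma finite_Sl: "finite (Sl m1 m2 i1)"
  unfolding Sl_def by (rule finite_subset[of _ "{- 2 * int m2<..- 2 * int m2 + 2 * int (if i1 = int m1 then m2 else 2 * m2)}"]) auto

lemma finite_Ipts: "finite (Ipts m1 m2)"
  unfolding Ipts_Sigma by (auto intro: finite_Sl)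

lemma chi_prod:
  "chi m1 m2 (a1, a2) (i1, i2) * cnj (chi m1 m2 (b1, b2) (i1, i2))
   = complex_of_real (cos (real_of_int a1 * real_of_int i1 * pi / (2 * real m1)) * cos (real_of_int b1 * real_of_int i1 * pi / (2 * real m1)))
     * exp (\<i> * complex_of_real (real_of_int (a2 - b2) * real_of_int i2 * pi / (2 * real m2)))"
proof -
  have "cnj (exp (\<i> * complex_of_real (real_of_int b2 * real_of_int i2 * pi / (2 * real m2))))
      = exp (- (\<i> * complex_of_real (real_of_int b2 * real_of_int i2 * pi / (2 * real m2))))"
    by (simp add: exp_cnj)
  moreover have "exp (\<i> * complex_of_real (real_of_int a2 * real_of_int i2 * pi / (2 * real m2)))
     * exp (- (\<i> * complex_of_real (real_of_int b2 * real_of_int i2 * pi / (2 * real m2))))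
     = exp (\<i> * complex_of_real (real_of_int (a2 - b2) * real_of_int i2 * pi / (2 * real m2)))"
    by (simp add: exp_add[symmetric] algebra_simps diff_divide_distrib)
  ultimately show ?thesis unfolding chi_def by (simp add: algebra_simps)
qed

lemma row_sum:
  fixes d :: int
  assumes "m2 \<ge> 1"
  shows "(\<Sum>x\<in>Sl m1 m2 i1. exp (\<i> * complex_of_real (real_of_int d * real_of_int x * pi / (2 * real m2))))
    = exp (\<i> * complex_of_real (real_of_int d * real_of_int (- 2 * int m2 + 1 + (- 2 * int m2 + 1 + i1) mod 2) * pi / (2 * real m2)))
      * (\<Sum>k<(if i1 = int m1 then m2 else 2 * m2). exp (\<i> * complex_of_real (real_of_int d * 2 * real k * pi / (2 * real m2))))"
proof -
  define n where "n = (if i1 = int m1 then m2 else 2 * m2)"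
  define b where "b = - 2 * int m2 + 1 + (- 2 * int m2 + 1 + i1) mod 2"
  have S: "Sl m1 m2 i1 = (\<lambda>k. b + 2 * int k) ` {..<n}"
    unfolding Sl_def n_def[symmetric] b_def using slice_param[of "- 2 * int m2" n i1] by (simp add: add.assoc)
  have "(\<Sum>x\<in>Sl m1 m2 i1. exp (\<i> * complex_of_real (real_of_int d * real_of_int x * pi / (2 * real m2))))
      = (\<Sum>k<n. exp (\<i> * complex_of_real (real_of_int d * real_of_int (b + 2 * int k) * pi / (2 * real m2))))"
    unfolding S by (subst sum.reindex) (auto simp: inj_on_def)
  also have "\<dots> = (\<Sum>k<n. exp (\<i> * complex_of_real (real_of_int d * real_of_int b * pi / (2 * real m2)))
      * exp (\<i> * complex_of_real (real_of_int d * 2 * real k * pi / (2 * real m2))))"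
    by (rule sum.cong) (auto simp: exp_add[symmetric] algebra_simps add_divide_distrib)
  finally show ?thesis unfolding n_def b_def by (simp add: sum_distrib_left)
qed




lemma dvd_small_int:
  fixes t :: int and m :: nat
  assumes "m \<ge> 1" "int m dvd t" "- int m < t" "t < int m"
  shows "t = 0"
proof (rule ccontr)
  assume "t \<noteq> 0"
  then have "\<bar>int m\<bar> \<le> \<bar>t\<bar>" using dvd_imp_le_int assms(2) by blast
  then show False using assms by linarith
qed

lemma winner_expand:
  assumes m1: "m1 \<ge> 1" and m2: "m2 \<ge> 1"
  shows "winner m1 m2 (chi m1 m2 (a1, a2)) (chi m1 m2 (b1, b2))
    = (\<Sum>i1\<in>{0..int m1}. complex_of_real ((if i1 = 0 then 1 / (4 * real m1 * real m2) else 2 / (4 * real m1 * real m2))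
         * (cos (real_of_int a1 * real_of_int i1 * pi / (2 * real m1)) * cos (real_of_int b1 * real_of_int i1 * pi / (2 * real m1))))
       * (exp (\<i> * complex_of_real (real_of_int (a2 - b2) * real_of_int (- 2 * int m2 + 1 + (- 2 * int m2 + 1 + i1) mod 2) * pi / (2 * real m2)))
      * (\<Sum>k<(if i1 = int m1 then m2 else 2 * m2). exp (\<i> * complex_of_real (real_of_int (a2 - b2) * 2 * real k * pi / (2 * real m2))))))"
proof -
  have "winner m1 m2 (chi m1 m2 (a1, a2)) (chi m1 m2 (b1, b2))
     = (\<Sum>i1\<in>{0..int m1}. \<Sum>i2\<in>Sl m1 m2 i1. complex_of_real (wt m1 m2 (i1, i2)) * (chi m1 m2 (a1, a2) (i1, i2) * cnj (chi m1 m2 (b1, b2) (i1, i2))))"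
    unfolding winner_def Ipts_Sigma
    by (subst sum.Sigma) (auto simp: finite_Sl mult.assoc)
  also have "\<dots> = (\<Sum>i1\<in>{0..int m1}. complex_of_real ((if i1 = 0 then 1 / (4 * real m1 * real m2) else 2 / (4 * real m1 * real m2))
         * (cos (real_of_int a1 * real_of_int i1 * pi / (2 * real m1)) * cos (real_of_int b1 * real_of_int i1 * pi / (2 * real m1))))
       * (\<Sum>i2\<in>Sl m1 m2 i1. exp (\<i> * complex_of_real (real_of_int (a2 - b2) * real_of_int i2 * pi / (2 * real m2)))))"
    unfolding chi_prod wt_def by (simp add: sum_distrib_left mult.assoc)
  finally show ?thesis by (simp only: row_sum[OF m2])
qed




lemma geo_row_full:
  fixes d :: int
  assumes m2: "m2 \<ge> 1" and "d \<noteq> 0" "- 2 * int m2 < d" "d < 2 * int m2"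
  shows "(\<Sum>k<2 * m2. exp (\<i> * complex_of_real (real_of_int d * 2 * real k * pi / (2 * real m2)))) = 0"
proof -
  have "\<not> int (2 * m2) dvd d" using dvd_small_int[of "2 * m2" d] assms by auto
  moreover have "(\<Sum>k<2 * m2. exp (\<i> * complex_of_real (real_of_int d * 2 * real k * pi / (2 * real m2))))
     = (\<Sum>k<2 * m2. exp (\<i> * complex_of_real (2 * pi * real_of_int d * real k / real (2 * m2))))"
    by (rule sum.cong) (auto simp: field_simps)
  ultimately show ?thesis using geo_exp[of "2 * m2" d] m2 by simp
qed

lemma geo_row_half:
  fixes d :: int
  assumes m2: "m2 \<ge> 1" and "d \<noteq> 0" "even d" "- 2 * int m2 < d" "d < 2 * int m2"
  shows "(\<Sum>k<m2. exp (\<i> * complex_of_real (real_of_int d * 2 * real k * pi / (2 * real m2)))) = 0"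
proof -
  obtain t where t: "d = 2 * t" using assms(3) by (auto elim: evenE)
  have "\<not> int m2 dvd t" using dvd_small_int[of m2 t] assms t by auto
  moreover have "(\<Sum>k<m2. exp (\<i> * complex_of_real (real_of_int d * 2 * real k * pi / (2 * real m2))))
     = (\<Sum>k<m2. exp (\<i> * complex_of_real (2 * pi * real_of_int t * real k / real m2)))"
    by (rule sum.cong) (auto simp: field_simps t)
  ultimately show ?thesis using geo_exp[of m2 t] m2 by simp
qed

lemma cos_odd_half:
  fixes a :: int
  assumes m1: "m1 \<ge> 1" and "odd a"
  shows "cos (real_of_int a * real_of_int (int m1) * pi / (2 * real m1)) = 0"
proof -
  have "real_of_int a * real_of_int (int m1) * pi / (2 * real m1) = of_int a * (pi / 2)"
    using m1 by (simp add: field_simps)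
  then show ?thesis using assms(2) cos_zero_iff_int by auto
qed




lemma e1: assumes m1: "m1 \<ge> (1::nat)" and t1: "a1 - b1 = 2 * t1"
  shows "real_of_int a1 * real_of_int j * pi / (2 * real m1) - real_of_int b1 * real_of_int j * pi / (2 * real m1)
             = pi * real_of_int t1 * real_of_int j / real m1"
proof -
  have "real_of_int a1 - real_of_int b1 = 2 * real_of_int t1" using t1 by (metis of_int_diff of_int_mult of_int_numeral)
  then have "real_of_int a1 * real_of_int j * pi - real_of_int b1 * real_of_int j * pi = 2 * (pi * real_of_int t1 * real_of_int j)"
    by (metis (no_types, lifting) left_diff_distrib mult.assoc mult.commute mult.left_commute)
  then show ?thesis using m1 by (simp add: diff_divide_distrib[symmetric])
qed

lemma e2: assumes m1: "m1 \<ge> (1::nat)" and t2: "a1 + b1 = 2 * t2"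
  shows "real_of_int a1 * real_of_int j * pi / (2 * real m1) + real_of_int b1 * real_of_int j * pi / (2 * real m1)
             = pi * real_of_int t2 * real_of_int j / real m1"
proof -
  have "real_of_int a1 + real_of_int b1 = 2 * real_of_int t2" using t2 by (metis of_int_add of_int_mult of_int_numeral)
  then have "real_of_int a1 * real_of_int j * pi + real_of_int b1 * real_of_int j * pi = 2 * (pi * real_of_int t2 * real_of_int j)"
    by (metis (no_types, lifting) distrib_right mult.assoc mult.commute mult.left_commute)
  then show ?thesis using m1 by (simp add: add_divide_distrib[symmetric])
qed

lemma winner_sq:
  assumes m1: "m1 \<ge> 1" and m2: "m2 \<ge> 1"
    and A: "(a1, a2) \<in> Gamma_sq m1 m2" and B: "(b1, b2) \<in> Gamma_sq m1 m2"
  shows "winner m1 m2 (chi m1 m2 (a1, a2)) (chi m1 m2 (b1, b2))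
     = (if (a1, a2) = (b1, b2) then (if a1 \<in> {0, 2 * int m1} then 1 else 1 / 2) else 0)"
proof -
  from A B have a: "0 \<le> a1" "a1 \<le> 2 * int m1" "- int m2 < a2" "a2 \<le> int m2" "even (a1 + a2)"
    and b: "0 \<le> b1" "b1 \<le> 2 * int m1" "- int m2 < b2" "b2 \<le> int m2" "even (b1 + b2)"
    by (auto simp: Gamma_sq_def Kset_def)
  show ?thesis
  proof (cases "a2 = b2")
    case False
    define d where "d = a2 - b2"
    have d: "d \<noteq> 0" "- 2 * int m2 < d" "d < 2 * int m2" using False a b by (auto simp: d_def)
    have "winner m1 m2 (chi m1 m2 (a1, a2)) (chi m1 m2 (b1, b2)) = 0"
      unfolding winner_expand[OF m1 m2] d_def[symmetric]
    proof (rule sum.neutral, rule ballI)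
      fix i1 assume i1: "i1 \<in> {0..int m1}"
      show "complex_of_real ((if i1 = 0 then 1 / (4 * real m1 * real m2) else 2 / (4 * real m1 * real m2))
         * (cos (real_of_int a1 * real_of_int i1 * pi / (2 * real m1)) * cos (real_of_int b1 * real_of_int i1 * pi / (2 * real m1))))
       * (exp (\<i> * complex_of_real (real_of_int d * real_of_int (- 2 * int m2 + 1 + (- 2 * int m2 + 1 + i1) mod 2) * pi / (2 * real m2)))
      * (\<Sum>k<(if i1 = int m1 then m2 else 2 * m2). exp (\<i> * complex_of_real (real_of_int d * 2 * real k * pi / (2 * real m2))))) = 0"
      proof (cases "i1 = int m1")
        case False then show ?thesis using geo_row_full[OF m2 d] by simp
      next
        case True
        show ?thesis
        proof (cases "even d")
          case True then show ?thesis using geo_row_half[OF m2 d(1) True d(2,3)] \<open>i1 = int m1\<close> by simp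
        next
          case False
          then have "odd a1 \<or> odd b1" using a b unfolding d_def by presburger
          then have "cos (real_of_int a1 * real_of_int (int m1) * pi / (2 * real m1)) * cos (real_of_int b1 * real_of_int (int m1) * pi / (2 * real m1)) = 0"
            by (metis cos_odd_half[OF m1] mult_eq_0_iff)
          then show ?thesis using \<open>i1 = int m1\<close> by simp
        qed
      qed
    qed
    then show ?thesis using False by simp
  next
    case True
    have "\<exists>t. a1 - b1 = 2 * t" using a(5) b(5) True by presburger
    then obtain t1 where t1: "a1 - b1 = 2 * t1" by blast
    have "\<exists>t. a1 + b1 = 2 * t" using a(5) b(5) True by presburger
    then obtain t2 where t2: "a1 + b1 = 2 * t2" by blast
    define cf where "cf j = (if j = 0 \<or> j = int m1 then 1 else 2 :: real)" for j :: int
    define H where "H t = (\<Sum>j\<in>{0..int m1}. cf j * cos (pi * real_of_int t * real_of_int j / real m1))" for t :: int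
    have "winner m1 m2 (chi m1 m2 (a1, a2)) (chi m1 m2 (b1, b2))
       = (\<Sum>i1\<in>{0..int m1}. complex_of_real (cf i1 / (2 * real m1) *
           (cos (real_of_int a1 * real_of_int i1 * pi / (2 * real m1)) * cos (real_of_int b1 * real_of_int i1 * pi / (2 * real m1)))))"
      unfolding winner_expand[OF m1 m2] True
    proof (rule sum.cong[OF refl])
      fix i1 assume i1: "i1 \<in> {0..int m1}"
      have wn: "(if i1 = 0 then 1 / (4 * real m1 * real m2) else 2 / (4 * real m1 * real m2))
           * real (if i1 = int m1 then m2 else 2 * m2) = cf i1 / (2 * real m1)"
        using m1 m2 i1 unfolding cf_def by (auto simp: divide_simps)
      show "complex_of_real ((if i1 = 0 then 1 / (4 * real m1 * real m2) else 2 / (4 * real m1 * real m2))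
         * (cos (real_of_int a1 * real_of_int i1 * pi / (2 * real m1)) * cos (real_of_int b1 * real_of_int i1 * pi / (2 * real m1))))
       * (exp (\<i> * complex_of_real (real_of_int (b2 - b2) * real_of_int (- 2 * int m2 + 1 + (- 2 * int m2 + 1 + i1) mod 2) * pi / (2 * real m2)))
      * (\<Sum>k<(if i1 = int m1 then m2 else 2 * m2). exp (\<i> * complex_of_real (real_of_int (b2 - b2) * 2 * real k * pi / (2 * real m2)))))
       = complex_of_real (cf i1 / (2 * real m1) *
           (cos (real_of_int a1 * real_of_int i1 * pi / (2 * real m1)) * cos (real_of_int b1 * real_of_int i1 * pi / (2 * real m1))))"
      proof -
        have "(exp (\<i> * complex_of_real (real_of_int (b2 - b2) * real_of_int (- 2 * int m2 + 1 + (- 2 * int m2 + 1 + i1) mod 2) * pi / (2 * real m2)))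
          * (\<Sum>k<(if i1 = int m1 then m2 else 2 * m2). exp (\<i> * complex_of_real (real_of_int (b2 - b2) * 2 * real k * pi / (2 * real m2)))))
          = complex_of_real (real (if i1 = int m1 then m2 else 2 * m2))" (is "_ = complex_of_real ?n") by simp
        moreover have "(if i1 = 0 then 1 / (4 * real m1 * real m2) else 2 / (4 * real m1 * real m2))
         * (cos (real_of_int a1 * real_of_int i1 * pi / (2 * real m1)) * cos (real_of_int b1 * real_of_int i1 * pi / (2 * real m1)))
         * ?n = cf i1 / (2 * real m1) *
           (cos (real_of_int a1 * real_of_int i1 * pi / (2 * real m1)) * cos (real_of_int b1 * real_of_int i1 * pi / (2 * real m1)))"
          unfolding wn[symmetric] by (simp only: mult_ac)
        ultimately show ?thesis by (simp only: of_real_mult[symmetric])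
      qed
    qed
    also have "\<dots> = complex_of_real (1 / (2 * real m1) * ((H t1 + H t2) / 2))"
    proof -
      have "(\<Sum>i1\<in>{0..int m1}. cf i1 / (2 * real m1) *
           (cos (real_of_int a1 * real_of_int i1 * pi / (2 * real m1)) * cos (real_of_int b1 * real_of_int i1 * pi / (2 * real m1))))
         = (\<Sum>i1\<in>{0..int m1}. 1 / (2 * real m1) * ((cf i1 * cos (pi * real_of_int t1 * real_of_int i1 / real m1)
              + cf i1 * cos (pi * real_of_int t2 * real_of_int i1 / real m1)) / 2))"
      proof (rule sum.cong)
        fix j assume "j \<in> {0..int m1}"
        have e1: "real_of_int a1 * real_of_int j * pi / (2 * real m1) - real_of_int b1 * real_of_int j * pi / (2 * real m1)
             = pi * real_of_int t1 * real_of_int j / real m1"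
          by (rule e1[OF m1 t1])
        have e2: "real_of_int a1 * real_of_int j * pi / (2 * real m1) + real_of_int b1 * real_of_int j * pi / (2 * real m1)
             = pi * real_of_int t2 * real_of_int j / real m1"
          by (rule e2[OF m1 t2])
        show "cf j / (2 * real m1) *
           (cos (real_of_int a1 * real_of_int j * pi / (2 * real m1)) * cos (real_of_int b1 * real_of_int j * pi / (2 * real m1)))
           = 1 / (2 * real m1) * ((cf j * cos (pi * real_of_int t1 * real_of_int j / real m1)
              + cf j * cos (pi * real_of_int t2 * real_of_int j / real m1)) / 2)"
          unfolding cos_times_cos e1 e2 by (simp add: field_simps)
      qed simp
      also have "\<dots> = 1 / (2 * real m1) * ((H t1 + H t2) / 2)"
        unfolding H_def by (simp add: sum_distrib_left sum.distrib sum_divide_distrib[symmetric])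
      finally show ?thesis by (simp only: of_real_sum[symmetric])
    qed
    also have "\<dots> = (if (a1, a2) = (b1, b2) then (if a1 \<in> {0, 2 * int m1} then 1 else 1 / 2) else 0)"
    proof -
      have H: "H t = (if int (2 * m1) dvd t then 2 * real m1 else 0)" for t
        unfolding H_def cf_def using cos_half[OF m1, of t] by simp
      have H1: "int (2 * m1) dvd t1 \<longleftrightarrow> a1 = b1"
      proof
        assume "int (2 * m1) dvd t1"
        then have "t1 = 0" using dvd_small_int[of "2 * m1" t1] m1 a b t1 by auto
        then show "a1 = b1" using t1 by simp
      qed (use t1 in auto)
      have H2: "int (2 * m1) dvd t2 \<longleftrightarrow> (t2 = 0 \<or> t2 = 2 * int m1)"
      proof
        assume dv: "int (2 * m1) dvd t2"
        show "t2 = 0 \<or> t2 = 2 * int m1"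
        proof (rule ccontr)
          assume "\<not> (t2 = 0 \<or> t2 = 2 * int m1)"
          then have "0 < t2" "t2 < 2 * int m1" using a b t2 by auto
          then show False using dvd_small_int[of "2 * m1" t2] dv m1 by auto
        qed
      qed auto
      show ?thesis
      proof (cases "a1 = b1")
        case True
        have t2a: "t2 = a1" using t2 True by simp
        have Ht1: "H t1 = 2 * real m1" using H1 True by (simp add: H)
        show ?thesis
        proof (cases "a1 \<in> {0, 2 * int m1}")
          case c: True
          have "H t2 = 2 * real m1" using c t2a H2 by (auto simp: H)
          then have R: "1 / (2 * real m1) * ((H t1 + H t2) / 2) = 1" using Ht1 m1 by simp
          have A: "complex_of_real (1 / (2 * real m1) * ((H t1 + H t2) / 2)) = 1" by (simp only: R) simp
          have B: "(if (a1, a2) = (b1, b2) then (if a1 \<in> {0, 2 * int m1} then 1 else 1 / 2) else 0) = (1 :: complex)"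
            using c True \<open>a2 = b2\<close> by simp
          show ?thesis by (simp only: A B)
        next
          case c: False
          have "H t2 = 0" using c t2a H2 by (auto simp: H)
          then have R: "1 / (2 * real m1) * ((H t1 + H t2) / 2) = 1 / 2" using Ht1 m1 by simp
          have A: "complex_of_real (1 / (2 * real m1) * ((H t1 + H t2) / 2)) = 1 / 2" by (simp only: R) simp
          have B: "(if (a1, a2) = (b1, b2) then (if a1 \<in> {0, 2 * int m1} then 1 else 1 / 2) else 0) = (1 / 2 :: complex)"
            using c True \<open>a2 = b2\<close> by simp
          show ?thesis by (simp only: A B)
        qed
      next
        case False
        have "\<not> (t2 = 0 \<or> t2 = 2 * int m1)" using False t2 a b by auto
        then have "H t2 = 0" "H t1 = 0" using False H1 H2 by (auto simp: H)
        then show ?thesis using False by simp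
      qed
    qed
    finally show ?thesis .
  qed
qed




lemma exp_i_int_pi: "exp (\<i> * complex_of_real (pi * real_of_int n)) = complex_of_real (cos (pi * real_of_int n))"
proof -
  have "exp (\<i> * complex_of_real (pi * real_of_int n)) = cis (pi * real_of_int n)" by (simp add: cis_conv_exp)
  also have "\<dots> = complex_of_real (cos (pi * real_of_int n))"
    by (simp add: complex_eq_iff)
  finally show ?thesis .
qed

lemma chi_shift:
  fixes g1 g2 i1 i2 e :: int
  assumes m1: "m1 \<ge> 1" and m2: "m2 \<ge> 1" and ev: "even (i1 + e * i2)"
  shows "chi m1 m2 (2 * int m1 - g1, g2 + 2 * int m2 * e) (i1, i2) = chi m1 m2 (g1, g2) (i1, i2)"
proof -
  define x where "x = real_of_int g1 * real_of_int i1 * pi / (2 * real m1)"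
  define y where "y = real_of_int g2 * real_of_int i2 * pi / (2 * real m2)"
  have c: "cos (real_of_int (2 * int m1 - g1) * real_of_int i1 * pi / (2 * real m1)) = cos (pi * real_of_int i1) * cos x"
  proof -
    have "real_of_int (2 * int m1 - g1) * real_of_int i1 * pi / (2 * real m1) = pi * real_of_int i1 - x"
      unfolding x_def using m1 by (simp add: field_simps)
    then show ?thesis by (simp add: cos_diff)
  qed
  have ex: "exp (\<i> * complex_of_real (real_of_int (g2 + 2 * int m2 * e) * real_of_int i2 * pi / (2 * real m2)))
     = exp (\<i> * complex_of_real y) * complex_of_real (cos (pi * real_of_int (e * i2)))"
  proof -
    have "real_of_int (g2 + 2 * int m2 * e) * real_of_int i2 * pi / (2 * real m2) = y + pi * real_of_int (e * i2)"
      unfolding y_def using m2 by (simp add: field_simps)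
    then have "exp (\<i> * complex_of_real (real_of_int (g2 + 2 * int m2 * e) * real_of_int i2 * pi / (2 * real m2)))
       = exp (\<i> * complex_of_real y) * exp (\<i> * complex_of_real (pi * real_of_int (e * i2)))"
      by (simp add: distrib_left exp_add)
    then show ?thesis by (simp only: exp_i_int_pi)
  qed
  have one: "cos (pi * real_of_int i1) * cos (pi * real_of_int (e * i2)) = 1"
  proof -
    obtain k where k: "i1 + e * i2 = 2 * k" using ev by (rule evenE)
    have "cos (pi * real_of_int i1) * cos (pi * real_of_int (e * i2)) = cos (pi * real_of_int i1 + pi * real_of_int (e * i2))"
      by (simp add: cos_add)
    also have "pi * real_of_int i1 + pi * real_of_int (e * i2) = (2 * pi) * real_of_int k"
      by (simp add: distrib_left[symmetric]) (metis k of_int_add of_int_mult of_int_numeral mult.assoc mult.commute mult.left_commute)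
    finally show ?thesis by simp
  qed
  have "chi m1 m2 (2 * int m1 - g1, g2 + 2 * int m2 * e) (i1, i2)
     = complex_of_real (cos x) * exp (\<i> * complex_of_real y) * complex_of_real (cos (pi * real_of_int i1) * cos (pi * real_of_int (e * i2)))"
    unfolding chi_def fst_conv snd_conv c ex by (simp add: algebra_simps)
  also have "\<dots> = chi m1 m2 (g1, g2) (i1, i2)" unfolding one chi_def x_def y_def by simp
  finally show ?thesis .
qed




lemma flip_K:
  assumes m2: "m2 \<ge> 1" and g: "g \<in> Kset m1 m2"
  shows "flip m1 m2 g = (2 * int m1 - fst g, if snd g \<le> 0 then snd g + 2 * int m2 else snd g - 2 * int m2)"
  using flip_eq[OF m2, of "snd g" m1 "fst g"] g by (cases g) (auto simp: Kset_def)

definition EK :: "nat \<Rightarrow> nat \<Rightarrow> (int \<times> int) set" where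
  "EK m1 m2 = {g \<in> Kset m1 m2. even (fst g + snd g)}"

lemma Gamma_sq_EK: "Gamma_sq m1 m2 \<subseteq> EK m1 m2"
  unfolding Gamma_sq_def EK_def by auto

lemma flip_EK:
  assumes m2: "m2 \<ge> 1" and g: "g \<in> EK m1 m2"
  shows "flip m1 m2 g \<in> EK m1 m2"
    and "flip m1 m2 (flip m1 m2 g) = g"
    and "flip m1 m2 g \<noteq> g"
    and "g \<in> Gamma_sq m1 m2 \<longleftrightarrow> flip m1 m2 g \<notin> Gamma_sq m1 m2"
proof -
  obtain g1 g2 where gg: "g = (g1, g2)" by (cases g)
  have k: "0 \<le> g1" "g1 \<le> 2 * int m1" "- 2 * int m2 < g2" "g2 \<le> 2 * int m2" "even (g1 + g2)"
    using g unfolding EK_def Kset_def gg by auto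
  have f: "flip m1 m2 g = (2 * int m1 - g1, if g2 \<le> 0 then g2 + 2 * int m2 else g2 - 2 * int m2)"
    using flip_K[OF m2, of g m1] g unfolding EK_def gg by auto
  show fe: "flip m1 m2 g \<in> EK m1 m2"
    unfolding f EK_def Kset_def using k m2 by auto
  have "flip m1 m2 (flip m1 m2 g) = (2 * int m1 - (2 * int m1 - g1),
      if (if g2 \<le> 0 then g2 + 2 * int m2 else g2 - 2 * int m2) \<le> 0
      then (if g2 \<le> 0 then g2 + 2 * int m2 else g2 - 2 * int m2) + 2 * int m2
      else (if g2 \<le> 0 then g2 + 2 * int m2 else g2 - 2 * int m2) - 2 * int m2)"
    using flip_K[OF m2, of "flip m1 m2 g" m1] fe unfolding EK_def f by auto
  then show "flip m1 m2 (flip m1 m2 g) = g" unfolding gg using k by auto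
  show "flip m1 m2 g \<noteq> g" unfolding f using gg m2 by auto
  show "g \<in> Gamma_sq m1 m2 \<longleftrightarrow> flip m1 m2 g \<notin> Gamma_sq m1 m2"
    unfolding f Gamma_sq_def Kset_def using gg k m2 by auto
qed

lemma chi_flip:
  assumes m1: "m1 \<ge> 1" and m2: "m2 \<ge> 1" and g: "g \<in> EK m1 m2" and i: "i \<in> Ipts m1 m2"
  shows "chi m1 m2 (flip m1 m2 g) i = chi m1 m2 g i"
proof -
  obtain g1 g2 where gg: "g = (g1, g2)" by (cases g)
  obtain i1 i2 where ii: "i = (i1, i2)" by (cases i)
  have ev: "even (i1 + i2)" using i unfolding ii Ipts_def by auto
  have f: "flip m1 m2 (g1, g2) = (2 * int m1 - g1, g2 + 2 * int m2 * (if g2 \<le> 0 then 1 else - 1))"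
    using flip_K[OF m2, of g m1] g unfolding EK_def gg by auto
  have "even (i1 + (if g2 \<le> 0 then 1 else - 1) * i2)" using ev by auto
  then show ?thesis unfolding gg ii f by (rule chi_shift[OF m1 m2])
qed




lemma card_Gamma_sq: "card (Gamma_sq m1 m2) = (2 * m1 + 1) * m2"
proof -
  have "Gamma_sq m1 m2 = Sigma {0..2 * int m1} (\<lambda>g1. {x::int. - int m2 < x \<and> x \<le> - int m2 + 2 * int m2 \<and> even (g1 + x)})"
    unfolding Gamma_sq_def Kset_def by auto
  moreover have "finite {x::int. - int m2 < x \<and> x \<le> - int m2 + 2 * int m2 \<and> even (g1 + x)}" for g1
    by (rule finite_subset[of _ "{- int m2<..- int m2 + 2 * int m2}"]) auto
  ultimately have "card (Gamma_sq m1 m2) = (\<Sum>g1\<in>{0..2 * int m1}. m2)"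
    by (simp add: card_slice[of "- int m2" m2, simplified])
  also have "\<dots> = (2 * m1 + 1) * m2"
  proof -
    have "nat (2 * int m1 + 1) = 2 * m1 + 1" by linarith
    then show ?thesis by simp
  qed
  finally show ?thesis .
qed

lemma card_Ipts: "card (Ipts m1 m2) = (2 * m1 + 1) * m2"
proof -
  have c: "card (Sl m1 m2 i1) = (if i1 = int m1 then m2 else 2 * m2)" for i1
    unfolding Sl_def by (rule card_slice)
  have "card (Ipts m1 m2) = (\<Sum>i1\<in>{0..int m1}. card (Sl m1 m2 i1))"
    unfolding Ipts_Sigma by (rule card_SigmaI) (auto simp: finite_Sl)
  also have "\<dots> = (\<Sum>i1\<in>insert (int m1) {0..<int m1}. (if i1 = int m1 then m2 else 2 * m2))"
    unfolding c by (rule sum.cong) auto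
  also have "\<dots> = m2 + (\<Sum>i1\<in>{0..<int m1}. 2 * m2)" by (subst sum.insert) auto
  also have "\<dots> = (2 * m1 + 1) * m2" by simp
  finally show ?thesis .
qed

lemma winner_cong:
  assumes "\<And>i. i \<in> Ipts m1 m2 \<Longrightarrow> f i = f' i" "\<And>i. i \<in> Ipts m1 m2 \<Longrightarrow> h i = h' i"
  shows "winner m1 m2 f h = winner m1 m2 f' h'"
  unfolding winner_def using assms by (intro sum.cong) auto




lemma flip_back:
  assumes m2: "m2 \<ge> 1" and g: "g \<in> Kset m1 m2" and f: "flip m1 m2 g \<in> EK m1 m2"
  shows "g \<in> EK m1 m2"
proof -
  have "even (fst (flip m1 m2 g) + snd (flip m1 m2 g))" using f unfolding EK_def by auto
  then have "even (fst g + snd g)" unfolding flip_K[OF m2 g] by (auto split: if_splits)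
  then show ?thesis using g unfolding EK_def by auto
qed

definition rep :: "nat \<Rightarrow> nat \<Rightarrow> int \<times> int \<Rightarrow> int \<times> int" where
  "rep m1 m2 g = (if g \<in> Gamma_sq m1 m2 then g else flip m1 m2 g)"

lemma rep_props:
  assumes m1: "m1 \<ge> 1" and m2: "m2 \<ge> 1" and g: "g \<in> EK m1 m2"
  shows "rep m1 m2 g \<in> Gamma_sq m1 m2"
    and "\<And>i. i \<in> Ipts m1 m2 \<Longrightarrow> chi m1 m2 (rep m1 m2 g) i = chi m1 m2 g i"
    and "fst (rep m1 m2 g) \<in> {0, 2 * int m1} \<longleftrightarrow> fst g \<in> {0, 2 * int m1}"
proof -
  show "rep m1 m2 g \<in> Gamma_sq m1 m2" unfolding rep_def using flip_EK(4)[OF m2 g] by auto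
  show "\<And>i. i \<in> Ipts m1 m2 \<Longrightarrow> chi m1 m2 (rep m1 m2 g) i = chi m1 m2 g i"
    unfolding rep_def using chi_flip[OF m1 m2 g] by auto
  have "g \<in> Kset m1 m2" using g unfolding EK_def by auto
  then show "fst (rep m1 m2 g) \<in> {0, 2 * int m1} \<longleftrightarrow> fst g \<in> {0, 2 * int m1}"
    unfolding rep_def using flip_K[OF m2] by auto
qed

lemma winner_EK:
  assumes m1: "m1 \<ge> 1" and m2: "m2 \<ge> 1" and g: "g \<in> EK m1 m2" and h: "h \<in> EK m1 m2"
  shows "winner m1 m2 (chi m1 m2 g) (chi m1 m2 h) = winner m1 m2 (chi m1 m2 (rep m1 m2 g)) (chi m1 m2 (rep m1 m2 h))"
  by (rule winner_cong) (auto simp: rep_props(2)[OF m1 m2 g] rep_props(2)[OF m1 m2 h])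

lemma winner_sq': 
  assumes m1: "m1 \<ge> 1" and m2: "m2 \<ge> 1" and A: "g \<in> Gamma_sq m1 m2" and B: "h \<in> Gamma_sq m1 m2"
  shows "winner m1 m2 (chi m1 m2 g) (chi m1 m2 h)
     = (if g = h then (if fst g \<in> {0, 2 * int m1} then 1 else 1 / 2) else 0)"
  using winner_sq[OF m1 m2, of "fst g" "snd g" "fst h" "snd h"] A B by simp

lemma Gamma_Omega_props:
  assumes m1: "m1 \<ge> 1" and m2: "m2 \<ge> 1" and O: "\<Omega> \<subseteq> Gamma_sq m1 m2"
  shows "Gamma_Omega m1 m2 \<Omega> \<subseteq> EK m1 m2"
    and "bij_betw (rep m1 m2) (Gamma_Omega m1 m2 \<Omega>) (Gamma_sq m1 m2)"
proof -
  show sub: "Gamma_Omega m1 m2 \<Omega> \<subseteq> EK m1 m2"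
    unfolding Gamma_Omega_def using Gamma_sq_EK flip_back[OF m2] O by blast
  show "bij_betw (rep m1 m2) (Gamma_Omega m1 m2 \<Omega>) (Gamma_sq m1 m2)"
  proof (rule bij_betw_imageI)
    show "inj_on (rep m1 m2) (Gamma_Omega m1 m2 \<Omega>)"
    proof (rule inj_onI)
      fix g h assume g: "g \<in> Gamma_Omega m1 m2 \<Omega>" and h: "h \<in> Gamma_Omega m1 m2 \<Omega>"
        and e: "rep m1 m2 g = rep m1 m2 h"
      have gE: "g \<in> EK m1 m2" and hE: "h \<in> EK m1 m2" using g h sub by auto
      have nO: "x \<notin> \<Omega>" if "x \<in> Gamma_Omega m1 m2 \<Omega>" "x \<in> Gamma_sq m1 m2" for x
      proof
        assume "x \<in> \<Omega>"
        then have "x \<in> Gamma_sq m1 m2 - \<Omega> \<Longrightarrow> False" by simp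
        moreover have "x \<in> EK m1 m2" using that sub by auto
        ultimately show False using that flip_EK(4)[OF m2, of x] O unfolding Gamma_Omega_def by auto
      qed
      show "g = h"
      proof (cases "g \<in> Gamma_sq m1 m2"; cases "h \<in> Gamma_sq m1 m2")
        assume "g \<in> Gamma_sq m1 m2" "h \<in> Gamma_sq m1 m2" then show ?thesis using e by (simp add: rep_def)
      next
        assume a: "g \<in> Gamma_sq m1 m2" "h \<notin> Gamma_sq m1 m2"
        then have "g = flip m1 m2 h" using e by (simp add: rep_def)
        moreover have "flip m1 m2 h \<in> \<Omega>" using h a(2) unfolding Gamma_Omega_def by auto
        ultimately show ?thesis using nO[OF g a(1)] by simp
      next
        assume a: "g \<notin> Gamma_sq m1 m2" "h \<in> Gamma_sq m1 m2"
        then have "h = flip m1 m2 g" using e by (simp add: rep_def)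
        moreover have "flip m1 m2 g \<in> \<Omega>" using g a(1) unfolding Gamma_Omega_def by auto
        ultimately show ?thesis using nO[OF h a(2)] by simp
      next
        assume a: "g \<notin> Gamma_sq m1 m2" "h \<notin> Gamma_sq m1 m2"
        then have "flip m1 m2 g = flip m1 m2 h" using e by (simp add: rep_def)
        then show ?thesis using flip_EK(2)[OF m2 gE] flip_EK(2)[OF m2 hE] by metis
      qed
    qed
    show "rep m1 m2 ` Gamma_Omega m1 m2 \<Omega> = Gamma_sq m1 m2"
    proof
      show "rep m1 m2 ` Gamma_Omega m1 m2 \<Omega> \<subseteq> Gamma_sq m1 m2"
        using rep_props(1)[OF m1 m2] sub by auto
      show "Gamma_sq m1 m2 \<subseteq> rep m1 m2 ` Gamma_Omega m1 m2 \<Omega>"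
      proof
        fix d assume d: "d \<in> Gamma_sq m1 m2"
        have dE: "d \<in> EK m1 m2" using d Gamma_sq_EK by auto
        show "d \<in> rep m1 m2 ` Gamma_Omega m1 m2 \<Omega>"
        proof (cases "d \<in> \<Omega>")
          case False
          then have "d \<in> Gamma_Omega m1 m2 \<Omega>" using d unfolding Gamma_Omega_def by auto
          then show ?thesis using d by (auto simp: rep_def intro!: image_eqI[of _ _ d])
        next
          case True
          have fE: "flip m1 m2 d \<in> EK m1 m2" by (rule flip_EK(1)[OF m2 dE])
          have "flip m1 m2 d \<in> Gamma_Omega m1 m2 \<Omega>"
            using True fE flip_EK(2)[OF m2 dE] unfolding Gamma_Omega_def EK_def by auto
          moreover have "rep m1 m2 (flip m1 m2 d) = d"
            using flip_EK(4)[OF m2 dE] d flip_EK(2)[OF m2 dE] by (auto simp: rep_def)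
          ultimately show ?thesis by (metis image_eqI)
        qed
      qed
    qed
  qed
qed




lemma Gamma_sq_span:
  assumes m1: "m1 \<ge> 1" and m2: "m2 \<ge> 1"
  shows "\<exists>c. \<forall>i\<in>Ipts m1 m2. f i = (\<Sum>g\<in>Gamma_sq m1 m2. c g * chi m1 m2 g i)"
proof (rule span_from_orth[where w = "\<lambda>i. complex_of_real (wt m1 m2 i)"])
  show "finite (Ipts m1 m2)" by (rule finite_Ipts)
  show "finite (Gamma_sq m1 m2)"
    by (rule finite_subset[of _ "{0..2 * int m1} \<times> {- int m2..int m2}"]) (auto simp: Gamma_sq_def Kset_def)
  show "card (Gamma_sq m1 m2) = card (Ipts m1 m2)" by (simp add: card_Gamma_sq card_Ipts)
  fix g assume g: "g \<in> Gamma_sq m1 m2"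
  show "(\<Sum>i\<in>Ipts m1 m2. complex_of_real (wt m1 m2 i) * chi m1 m2 g i * cnj (chi m1 m2 g i)) \<noteq> 0"
    using winner_sq'[OF m1 m2 g g] unfolding winner_def by auto
next
  fix g h assume "g \<in> Gamma_sq m1 m2" "h \<in> Gamma_sq m1 m2" "g \<noteq> h"
  then show "(\<Sum>i\<in>Ipts m1 m2. complex_of_real (wt m1 m2 i) * chi m1 m2 g i * cnj (chi m1 m2 h i)) = 0"
    using winner_sq'[OF m1 m2, of g h] unfolding winner_def by auto
qed

lemma spectral_Omega:
  assumes m1: "m1 \<ge> 1" and m2: "m2 \<ge> 1" and O: "\<Omega> \<subseteq> Gamma_sq m1 m2"
  shows "spectral_index_set m1 m2 (Gamma_Omega m1 m2 \<Omega>)"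
proof -
  let ?G = "Gamma_Omega m1 m2 \<Omega>"
  note sub = Gamma_Omega_props(1)[OF m1 m2 O]
  note bij = Gamma_Omega_props(2)[OF m1 m2 O]
  have K: "?G \<subseteq> Kset m1 m2" and ev: "\<forall>g\<in>?G. even (fst g + snd g)" using sub unfolding EK_def by auto
  have nz: "\<forall>g\<in>?G. winner m1 m2 (chi m1 m2 g) (chi m1 m2 g) \<noteq> 0"
  proof
    fix g assume g: "g \<in> ?G"
    then have gE: "g \<in> EK m1 m2" using sub by auto
    show "winner m1 m2 (chi m1 m2 g) (chi m1 m2 g) \<noteq> 0"
      unfolding winner_EK[OF m1 m2 gE gE] using winner_sq'[OF m1 m2 rep_props(1)[OF m1 m2 gE] rep_props(1)[OF m1 m2 gE]]
      by auto
  qed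
  have orth: "\<forall>g\<in>?G. \<forall>h\<in>?G. g \<noteq> h \<longrightarrow> winner m1 m2 (chi m1 m2 g) (chi m1 m2 h) = 0"
  proof (intro ballI impI)
    fix g h assume g: "g \<in> ?G" and h: "h \<in> ?G" and ne: "g \<noteq> h"
    then have gE: "g \<in> EK m1 m2" and hE: "h \<in> EK m1 m2" using sub by auto
    have "rep m1 m2 g \<noteq> rep m1 m2 h" using bij g h ne by (auto simp: bij_betw_def inj_on_def)
    then show "winner m1 m2 (chi m1 m2 g) (chi m1 m2 h) = 0"
      unfolding winner_EK[OF m1 m2 gE hE] using winner_sq'[OF m1 m2 rep_props(1)[OF m1 m2 gE] rep_props(1)[OF m1 m2 hE]]
      by auto
  qed
  have span: "\<forall>f :: int \<times> int \<Rightarrow> complex. \<exists>c :: int \<times> int \<Rightarrow> complex.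
        \<forall>i\<in>Ipts m1 m2. f i = (\<Sum>\<gamma>\<in>?G. c \<gamma> * chi m1 m2 \<gamma> i)"
  proof
    fix f :: "int \<times> int \<Rightarrow> complex"
    obtain c where c: "\<forall>i\<in>Ipts m1 m2. f i = (\<Sum>g\<in>Gamma_sq m1 m2. c g * chi m1 m2 g i)"
      using Gamma_sq_span[OF m1 m2] by blast
    show "\<exists>c :: int \<times> int \<Rightarrow> complex. \<forall>i\<in>Ipts m1 m2. f i = (\<Sum>\<gamma>\<in>?G. c \<gamma> * chi m1 m2 \<gamma> i)"
    proof (intro exI ballI)
      fix i assume i: "i \<in> Ipts m1 m2"
      have "f i = (\<Sum>g\<in>Gamma_sq m1 m2. c g * chi m1 m2 g i)" using c i by blast
      also have "\<dots> = (\<Sum>g\<in>?G. c (rep m1 m2 g) * chi m1 m2 (rep m1 m2 g) i)"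
        by (rule sum.reindex_bij_betw[OF bij, symmetric])
      also have "\<dots> = (\<Sum>g\<in>?G. c (rep m1 m2 g) * chi m1 m2 g i)"
      proof (rule sum.cong[OF refl])
        fix g assume "g \<in> ?G"
        then have "g \<in> EK m1 m2" using sub by auto
        then show "c (rep m1 m2 g) * chi m1 m2 (rep m1 m2 g) i = c (rep m1 m2 g) * chi m1 m2 g i"
          using rep_props(2)[OF m1 m2 _ i] by simp
      qed
      finally show "f i = (\<Sum>g\<in>?G. (c \<circ> rep m1 m2) g * chi m1 m2 g i)" by simp
    qed
  qed
  show ?thesis unfolding spectral_index_set_def using K ev nz orth span by blast
qed

lemma spectral_is_Omega:
  assumes m1: "m1 \<ge> 1" and m2: "m2 \<ge> 1" and S: "spectral_index_set m1 m2 \<Gamma>"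
  shows "\<Gamma> = Gamma_Omega m1 m2 {d \<in> Gamma_sq m1 m2. d \<notin> \<Gamma>}"
proof -
  have sub: "\<Gamma> \<subseteq> EK m1 m2" using S unfolding spectral_index_set_def EK_def by auto
  have nzS: "\<And>g. g \<in> \<Gamma> \<Longrightarrow> winner m1 m2 (chi m1 m2 g) (chi m1 m2 g) \<noteq> 0"
    and orS: "\<And>g h. g \<in> \<Gamma> \<Longrightarrow> h \<in> \<Gamma> \<Longrightarrow> g \<noteq> h \<Longrightarrow> winner m1 m2 (chi m1 m2 g) (chi m1 m2 h) = 0"
    and spS: "\<And>f. \<exists>c. \<forall>i\<in>Ipts m1 m2. f i = (\<Sum>\<gamma>\<in>\<Gamma>. c \<gamma> * chi m1 m2 \<gamma> i)"
    using S unfolding spectral_index_set_def by blast+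
  have notboth: "flip m1 m2 g \<notin> \<Gamma>" if g: "g \<in> \<Gamma>" for g
  proof
    assume fg: "flip m1 m2 g \<in> \<Gamma>"
    have gE: "g \<in> EK m1 m2" using g sub by auto
    have "winner m1 m2 (chi m1 m2 g) (chi m1 m2 (flip m1 m2 g)) = winner m1 m2 (chi m1 m2 g) (chi m1 m2 g)"
      by (rule winner_cong) (auto simp: chi_flip[OF m1 m2 gE])
    then show False using orS[OF g fg] flip_EK(3)[OF m2 gE] nzS[OF g] by auto
  qed
  have atleast: "d \<in> \<Gamma> \<or> flip m1 m2 d \<in> \<Gamma>" if d: "d \<in> Gamma_sq m1 m2" for d
  proof (rule ccontr)
    assume "\<not> (d \<in> \<Gamma> \<or> flip m1 m2 d \<in> \<Gamma>)"
    then have nd: "d \<notin> \<Gamma>" and nfd: "flip m1 m2 d \<notin> \<Gamma>" by auto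
    have dE: "d \<in> EK m1 m2" using d Gamma_sq_EK by auto
    have z: "winner m1 m2 (chi m1 m2 d) (chi m1 m2 g) = 0" if g: "g \<in> \<Gamma>" for g
    proof -
      have gE: "g \<in> EK m1 m2" using g sub by auto
      have "rep m1 m2 g \<noteq> d"
      proof
        assume r: "rep m1 m2 g = d"
        show False
        proof (cases "g \<in> Gamma_sq m1 m2")
          case True then show False using r g nd by (simp add: rep_def)
        next
          case False
          then have "flip m1 m2 g = d" using r by (simp add: rep_def)
          then have "g = flip m1 m2 d" using flip_EK(2)[OF m2 gE] by metis
          then show False using g nfd by simp
        qed
      qed
      moreover have "rep m1 m2 d = d" using d by (simp add: rep_def)
      ultimately show ?thesis
        unfolding winner_EK[OF m1 m2 dE gE]
        using winner_sq'[OF m1 m2 rep_props(1)[OF m1 m2 dE] rep_props(1)[OF m1 m2 gE]] by auto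
    qed
    obtain c where c: "\<forall>i\<in>Ipts m1 m2. chi m1 m2 d i = (\<Sum>\<gamma>\<in>\<Gamma>. c \<gamma> * chi m1 m2 \<gamma> i)"
      using spS by blast
    have fin: "finite \<Gamma>"
      by (rule finite_subset[of _ "{0..2 * int m1} \<times> {- 2 * int m2..2 * int m2}"])
         (use sub in \<open>auto simp: EK_def Kset_def\<close>)
    have "winner m1 m2 (chi m1 m2 d) (chi m1 m2 d)
       = (\<Sum>i\<in>Ipts m1 m2. complex_of_real (wt m1 m2 i) * chi m1 m2 d i * cnj (\<Sum>\<gamma>\<in>\<Gamma>. c \<gamma> * chi m1 m2 \<gamma> i))"
      unfolding winner_def using c by (intro sum.cong) auto
    also have "\<dots> = (\<Sum>i\<in>Ipts m1 m2. \<Sum>\<gamma>\<in>\<Gamma>. cnj (c \<gamma>) * (complex_of_real (wt m1 m2 i) * chi m1 m2 d i * cnj (chi m1 m2 \<gamma> i)))"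
      by (rule sum.cong[OF refl], simp only: cnj_sum complex_cnj_mult sum_distrib_left, rule sum.cong[OF refl], simp only: mult_ac)
    also have "\<dots> = (\<Sum>\<gamma>\<in>\<Gamma>. cnj (c \<gamma>) * winner m1 m2 (chi m1 m2 d) (chi m1 m2 \<gamma>))"
      unfolding winner_def by (subst sum.swap) (simp add: sum_distrib_left)
    also have "\<dots> = 0" using z by simp
    finally show False using winner_sq'[OF m1 m2 d d] by (simp split: if_splits)
  qed
  show ?thesis
  proof
    show "\<Gamma> \<subseteq> Gamma_Omega m1 m2 {d \<in> Gamma_sq m1 m2. d \<notin> \<Gamma>}"
    proof
      fix g assume g: "g \<in> \<Gamma>"
      have gE: "g \<in> EK m1 m2" using g sub by auto
      show "g \<in> Gamma_Omega m1 m2 {d \<in> Gamma_sq m1 m2. d \<notin> \<Gamma>}"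
      proof (cases "g \<in> Gamma_sq m1 m2")
        case True then show ?thesis using g unfolding Gamma_Omega_def by auto
      next
        case False
        then have "flip m1 m2 g \<in> Gamma_sq m1 m2" using flip_EK(4)[OF m2 gE] by auto
        then show ?thesis using notboth[OF g] gE unfolding Gamma_Omega_def EK_def by auto
      qed
    qed
    show "Gamma_Omega m1 m2 {d \<in> Gamma_sq m1 m2. d \<notin> \<Gamma>} \<subseteq> \<Gamma>"
    proof
      fix g assume g: "g \<in> Gamma_Omega m1 m2 {d \<in> Gamma_sq m1 m2. d \<notin> \<Gamma>}"
      show "g \<in> \<Gamma>"
      proof (cases "g \<in> Gamma_sq m1 m2 - {d \<in> Gamma_sq m1 m2. d \<notin> \<Gamma>}")
        case True then show ?thesis by auto
      next
        case False
        then have gK: "g \<in> Kset m1 m2" and fg: "flip m1 m2 g \<in> Gamma_sq m1 m2" "flip m1 m2 g \<notin> \<Gamma>"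
          using g unfolding Gamma_Omega_def by auto
        have gE: "g \<in> EK m1 m2" using flip_back[OF m2 gK] fg(1) Gamma_sq_EK by auto
        show ?thesis using atleast[OF fg(1)] fg(2) flip_EK(2)[OF m2 gE] by simp
      qed
    qed
  qed
qed


lemma part4:
  assumes m1: "m1 \<ge> 1" and m2: "m2 \<ge> 1" and gE: "\<gamma> \<in> EK m1 m2"
  shows "winner m1 m2 (chi m1 m2 \<gamma>) (chi m1 m2 \<gamma>) = (if fst \<gamma> \<in> {0, 2 * int m1} then 1 else 1 / 2)"
proof -
  have "winner m1 m2 (chi m1 m2 \<gamma>) (chi m1 m2 \<gamma>) = winner m1 m2 (chi m1 m2 (rep m1 m2 \<gamma>)) (chi m1 m2 (rep m1 m2 \<gamma>))"
    by (rule winner_EK[OF m1 m2 gE gE])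
  also have "\<dots> = (if fst (rep m1 m2 \<gamma>) \<in> {0, 2 * int m1} then 1 else 1 / 2)"
    using winner_sq'[OF m1 m2 rep_props(1)[OF m1 m2 gE] rep_props(1)[OF m1 m2 gE]] by simp
  also have "\<dots> = (if fst \<gamma> \<in> {0, 2 * int m1} then 1 else 1 / 2)"
    using rep_props(3)[OF m1 m2 gE] by (simp only:)
  finally show ?thesis .
qed

lemma part3:
  assumes m1: "m1 \<ge> 1" and m2: "m2 \<ge> 1" and S: "spectral_index_set m1 m2 \<Gamma>"
  shows "card \<Gamma> = (2 * m1 + 1) * m2"
proof -
  have e: "\<Gamma> = Gamma_Omega m1 m2 {d \<in> Gamma_sq m1 m2. d \<notin> \<Gamma>}" by (rule spectral_is_Omega[OF m1 m2 S])
  have "bij_betw (rep m1 m2) (Gamma_Omega m1 m2 {d \<in> Gamma_sq m1 m2. d \<notin> \<Gamma>}) (Gamma_sq m1 m2)"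
    by (rule Gamma_Omega_props(2)[OF m1 m2]) blast
  then have "bij_betw (rep m1 m2) \<Gamma> (Gamma_sq m1 m2)" using e by (simp only:)
  then have "card \<Gamma> = card (Gamma_sq m1 m2)" by (rule bij_betw_same_card)
  then show ?thesis by (simp only: card_Gamma_sq)
qed

theorem corollary5p2:
  fixes m1 m2 :: nat
  assumes "m1 \<ge> 1" and "m2 \<ge> 1"
  shows "(\<forall>\<Omega>. \<Omega> \<subseteq> Gamma_sq m1 m2 \<longrightarrow> spectral_index_set m1 m2 (Gamma_Omega m1 m2 \<Omega>))
     \<and> (\<forall>\<Gamma>. spectral_index_set m1 m2 \<Gamma> \<longrightarrow> (\<exists>\<Omega>. \<Omega> \<subseteq> Gamma_sq m1 m2 \<and> \<Gamma> = Gamma_Omega m1 m2 \<Omega>))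
     \<and> (\<forall>\<Gamma>. spectral_index_set m1 m2 \<Gamma> \<longrightarrow> card \<Gamma> = (2 * m1 + 1) * m2)
     \<and> (\<forall>\<Gamma> \<gamma>. spectral_index_set m1 m2 \<Gamma> \<and> \<gamma> \<in> \<Gamma> \<longrightarrow>
          winner m1 m2 (chi m1 m2 \<gamma>) (chi m1 m2 \<gamma>) =
            (if fst \<gamma> \<in> {0, 2 * int m1} then 1 else 1 / 2))"
proof -
  note m1 = assms(1) and m2 = assms(2)
  have A: "\<forall>\<Omega>. \<Omega> \<subseteq> Gamma_sq m1 m2 \<longrightarrow> spectral_index_set m1 m2 (Gamma_Omega m1 m2 \<Omega>)"
    using spectral_Omega[OF m1 m2] by blast
  have B: "\<forall>\<Gamma>. spectral_index_set m1 m2 \<Gamma> \<longrightarrow> (\<exists>\<Omega>. \<Omega> \<subseteq> Gamma_sq m1 m2 \<and> \<Gamma> = Gamma_Omega m1 m2 \<Omega>)"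
  proof (intro allI impI)
    fix \<Gamma> assume S: "spectral_index_set m1 m2 \<Gamma>"
    have "{d \<in> Gamma_sq m1 m2. d \<notin> \<Gamma>} \<subseteq> Gamma_sq m1 m2" by blast
    then show "\<exists>\<Omega>. \<Omega> \<subseteq> Gamma_sq m1 m2 \<and> \<Gamma> = Gamma_Omega m1 m2 \<Omega>"
      using spectral_is_Omega[OF m1 m2 S] by blast
  qed
  have C: "\<forall>\<Gamma>. spectral_index_set m1 m2 \<Gamma> \<longrightarrow> card \<Gamma> = (2 * m1 + 1) * m2"
    using part3[OF m1 m2] by blast
  have D: "\<forall>\<Gamma> \<gamma>. spectral_index_set m1 m2 \<Gamma> \<and> \<gamma> \<in> \<Gamma> \<longrightarrow>
          winner m1 m2 (chi m1 m2 \<gamma>) (chi m1 m2 \<gamma>) = (if fst \<gamma> \<in> {0, 2 * int m1} then 1 else 1 / 2)"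
  proof (intro allI impI)
    fix \<Gamma> \<gamma> assume a: "spectral_index_set m1 m2 \<Gamma> \<and> \<gamma> \<in> \<Gamma>"
    then have gE: "\<gamma> \<in> EK m1 m2" unfolding spectral_index_set_def EK_def by auto
    show "winner m1 m2 (chi m1 m2 \<gamma>) (chi m1 m2 \<gamma>) = (if fst \<gamma> \<in> {0, 2 * int m1} then 1 else 1 / 2)"
      by (rule part4[OF m1 m2 gE])
  qed
  show ?thesis using A B C D by (intro conjI)
qed


end
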